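(* Every subquotient (in the category of $\mathcal{D}_{\mathbb{A}^n_{\mathbb{C}}}$-modules) of a linear module on $\mathbb{A}^n_{\mathbb{C}}$ is a linear module.
   Context: All $\mathcal{D}$-modules are algebraic. For a finite-dimensional $\mathbb{C}$-vector space $E$ and a linear form $\varphi:E\to\mathbb{C}$, let $\mathcal{E}^{\varphi}$ denote the $\mathcal{D}_E$-module $(\mathcal{O}_E, d+d\varphi)$. A \emph{linear module on $E$} is a $\mathcal{D}_E$-module isomorphic to a finite direct sum of modules of the form $\mathcal{E}^{\varphi}$ with $\varphi$ linear forms on $E$. *)

theory Defs
  imports Complex_Main
begin

text \<open>Polynomials in C[x_0,...,x_{n-1}] represented by their coefficient functions on
exponent vectors (nat => nat), finitely supported, and only involving variables i < n.\<close>

type_synonym cpoly = "(nat \<Rightarrow> nat) \<Rightarrow> complex"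

definition polys :: "nat \<Rightarrow> cpoly set" where
  "polys n = {p. finite {a. p a \<noteq> 0} \<and> (\<forall>a. p a \<noteq> 0 \<longrightarrow> (\<forall>i\<ge>n. a i = 0))}"

definition mulX :: "nat \<Rightarrow> cpoly \<Rightarrow> cpoly" where
  "mulX i p = (\<lambda>a. if a i = 0 then 0 else p (a(i := a i - 1)))"

definition pderivX :: "nat \<Rightarrow> cpoly \<Rightarrow> cpoly" where
  "pderivX i p = (\<lambda>a. of_nat (a i + 1) * p (a(i := a i + 1)))"

text \<open>Action of d/dx_i on E^phi = (O_E, d + d phi), where phi = sum_i phi_i x_i:
  p |-> d_i p + phi_i p.\<close>
definition twD :: "(nat \<Rightarrow> complex) \<Rightarrow> nat \<Rightarrow> cpoly \<Rightarrow> cpoly" where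
  "twD phi i p = (\<lambda>a. pderivX i p a + phi i * p a)"

text \<open>The linear module E^{phi_0} + ... + E^{phi_{m-1}} on A^n (phis = [phi_0,...]).
  Elements: families indexed by k < m, zero outside.\<close>
type_synonym lelem = "nat \<Rightarrow> cpoly"

definition lin_carrier :: "nat \<Rightarrow> (nat \<Rightarrow> complex) list \<Rightarrow> lelem set" where
  "lin_carrier n phis = {v. (\<forall>k < length phis. v k \<in> polys n) \<and>
                             (\<forall>k \<ge> length phis. v k = (\<lambda>_. 0))}"

definition lin_zero :: lelem where "lin_zero = (\<lambda>k a. 0)"

definition lin_add :: "lelem \<Rightarrow> lelem \<Rightarrow> lelem" where
  "lin_add v w = (\<lambda>k a. v k a + w k a)"

definition lin_scale :: "complex \<Rightarrow> lelem \<Rightarrow> lelem" where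
  "lin_scale c v = (\<lambda>k a. c * v k a)"

definition lin_X :: "nat \<Rightarrow> lelem \<Rightarrow> lelem" where
  "lin_X i v = (\<lambda>k. mulX i (v k))"

definition lin_D :: "(nat \<Rightarrow> complex) list \<Rightarrow> nat \<Rightarrow> lelem \<Rightarrow> lelem" where
  "lin_D phis i v = (\<lambda>k. if k < length phis then twD (phis ! k) i (v k) else v k)"

text \<open>Sub-D-modules (D = Weyl algebra generated by x_i, d_i, i < n) of the linear module.\<close>
definition is_Dsub :: "nat \<Rightarrow> (nat \<Rightarrow> complex) list \<Rightarrow> lelem set \<Rightarrow> bool" where
  "is_Dsub n phis N \<longleftrightarrow> N \<subseteq> lin_carrier n phis \<and> lin_zero \<in> N \<and>
     (\<forall>v\<in>N. \<forall>w\<in>N. lin_add v w \<in> N) \<and>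
     (\<forall>c. \<forall>v\<in>N. lin_scale c v \<in> N) \<and>
     (\<forall>i<n. \<forall>v\<in>N. lin_X i v \<in> N \<and> lin_D phis i v \<in> N)"

end

theory Submission
  imports Defs "HOL-Library.Function_Algebras"
begin


definition deg :: "nat \<Rightarrow> (nat \<Rightarrow> nat) \<Rightarrow> nat" where
  "deg n b = (\<Sum>i<n. b i)"

definition dlt :: "nat \<Rightarrow> nat \<Rightarrow> cpoly \<Rightarrow> bool" where
  "dlt n e p \<longleftrightarrow> (\<forall>b. p b \<noteq> 0 \<longrightarrow> deg n b < e)"

definition T :: "(nat \<Rightarrow> complex) \<Rightarrow> nat \<times> complex \<Rightarrow> cpoly \<Rightarrow> cpoly" where
  "T \<phi> x p = (\<lambda>b. pderivX (fst x) p b + (\<phi> (fst x) - snd x) * p b)"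

fun tlp :: "(nat \<Rightarrow> complex) \<Rightarrow> (nat \<times> complex) list \<Rightarrow> cpoly \<Rightarrow> cpoly" where
  "tlp \<phi> [] p = p"
| "tlp \<phi> (x#xs) p = T \<phi> x (tlp \<phi> xs p)"

lemma deg_upd: "i < n \<Longrightarrow> deg n (b(i := Suc (b i))) = Suc (deg n b)"
proof -
  assume i: "i < n"
  have "deg n (b(i := Suc (b i))) = (\<Sum>j<n. b j + (if j = i then 1 else 0))"
    unfolding deg_def by (rule sum.cong) auto
  also have "\<dots> = deg n b + 1" using i by (simp add: sum.distrib deg_def)
  finally show ?thesis by simp
qed

lemma pderiv_polys:
  assumes i: "i < n" and p: "p \<in> polys n"
  shows "pderivX i p \<in> polys n"
proof -
  have fin: "finite {a. p a \<noteq> 0}" and z: "\<And>a j. p a \<noteq> 0 \<Longrightarrow> j \<ge> n \<Longrightarrow> a j = 0"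
    using p unfolding polys_def by auto
  have "{a. pderivX i p a \<noteq> 0} \<subseteq> (\<lambda>a. a(i := a i - 1)) ` {a. p a \<noteq> 0}"
  proof
    fix a assume "a \<in> {a. pderivX i p a \<noteq> 0}"
    then have "p (a(i := a i + 1)) \<noteq> 0" by (auto simp: pderivX_def)
    moreover have "a = (a(i := a i + 1))(i := (a(i := a i + 1)) i - 1)" by simp
    ultimately show "a \<in> (\<lambda>a. a(i := a i - 1)) ` {a. p a \<noteq> 0}" by blast
  qed
  then have "finite {a. pderivX i p a \<noteq> 0}" using fin finite_subset by blast
  moreover have "\<forall>a. pderivX i p a \<noteq> 0 \<longrightarrow> (\<forall>j\<ge>n. a j = 0)"
  proof (intro allI impI)
    fix a j assume "pderivX i p a \<noteq> 0" "n \<le> j"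
    then have "p (a(i := a i + 1)) \<noteq> 0" by (auto simp: pderivX_def)
    from z[OF this \<open>n \<le> j\<close>] show "a j = 0" using i \<open>n \<le> j\<close> by (auto split: if_splits)
  qed
  ultimately show ?thesis unfolding polys_def by blast
qed

lemma T_polys: "fst x < n \<Longrightarrow> p \<in> polys n \<Longrightarrow> T \<phi> x p \<in> polys n"
proof -
  assume i: "fst x < n" and p: "p \<in> polys n"
  have q: "pderivX (fst x) p \<in> polys n" by (rule pderiv_polys[OF i p])
  have "{a. T \<phi> x p a \<noteq> 0} \<subseteq> {a. pderivX (fst x) p a \<noteq> 0} \<union> {a. p a \<noteq> 0}"
    by (auto simp: T_def)
  then show ?thesis using p q unfolding polys_def T_def
    by (auto intro: finite_subset)
qed

lemma pderiv_nz: "pderivX i p b \<noteq> 0 \<Longrightarrow> p (b(i := Suc (b i))) \<noteq> 0"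
  unfolding pderivX_def by auto

lemma T_dlt: "fst x < n \<Longrightarrow> dlt n e p \<Longrightarrow> dlt n e (T \<phi> x p)"
  unfolding dlt_def
proof (intro allI impI)
  fix b assume i: "fst x < n" and d: "\<forall>b. p b \<noteq> 0 \<longrightarrow> deg n b < e" and nz: "T \<phi> x p b \<noteq> 0"
  then have "pderivX (fst x) p b \<noteq> 0 \<or> p b \<noteq> 0" unfolding T_def by auto
  then show "deg n b < e"
  proof
    assume "pderivX (fst x) p b \<noteq> 0"
    then have "deg n (b(fst x := Suc (b (fst x)))) < e" using d pderiv_nz by blast
    then show ?thesis using deg_upd[OF i] by simp
  qed (use d in blast)
qed

lemma T_dlt_dec: "fst x < n \<Longrightarrow> \<phi> (fst x) = snd x \<Longrightarrow> dlt n e p \<Longrightarrow> dlt n (e - 1) (T \<phi> x p)"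
  unfolding dlt_def
proof (intro allI impI)
  fix b assume i: "fst x < n" and ph: "\<phi> (fst x) = snd x" and d: "\<forall>b. p b \<noteq> 0 \<longrightarrow> deg n b < e" and nz: "T \<phi> x p b \<noteq> 0"
  then have "pderivX (fst x) p b \<noteq> 0" unfolding T_def by auto
  then have "deg n (b(fst x := Suc (b (fst x)))) < e" using d pderiv_nz by blast
  then show "deg n b < e - 1" using deg_upd[OF i] by simp
qed

lemma T_top: "fst x < n \<Longrightarrow> dlt n (Suc e) p \<Longrightarrow> deg n b = e \<Longrightarrow> T \<phi> x p b = (\<phi> (fst x) - snd x) * p b"
proof -
  assume i: "fst x < n" and d: "dlt n (Suc e) p" and db: "deg n b = e"
  have "p (b(fst x := Suc (b (fst x)))) = 0"
    using d deg_upd[OF i, of b] db unfolding dlt_def by auto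
  then have "pderivX (fst x) p b = 0" using pderiv_nz by blast
  then show ?thesis unfolding T_def by simp
qed

definition cnt :: "(nat \<Rightarrow> complex) \<Rightarrow> (nat \<times> complex) list \<Rightarrow> nat" where
  "cnt \<phi> xs = length (filter (\<lambda>x. \<phi> (fst x) = snd x) xs)"

lemma tlp_polys: "\<forall>x\<in>set xs. fst x < n \<Longrightarrow> p \<in> polys n \<Longrightarrow> tlp \<phi> xs p \<in> polys n"
  by (induction xs) (auto intro: T_polys)

lemma tlp_dlt: "\<forall>x\<in>set xs. fst x < n \<Longrightarrow> dlt n e p \<Longrightarrow> dlt n (e - cnt \<phi> xs) (tlp \<phi> xs p)"
proof (induction xs)
  case Nil then show ?case by (simp add: cnt_def)
next
  case (Cons x xs)
  then have IH: "dlt n (e - cnt \<phi> xs) (tlp \<phi> xs p)" by simp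
  show ?case
  proof (cases "\<phi> (fst x) = snd x")
    case True
    have "dlt n (e - cnt \<phi> xs - 1) (T \<phi> x (tlp \<phi> xs p))"
      using T_dlt_dec[of x n \<phi> "e - cnt \<phi> xs" "tlp \<phi> xs p"] True IH Cons.prems by simp
    then show ?thesis using True by (simp add: cnt_def)
  next
    case False
    then show ?thesis using T_dlt[OF _ IH] Cons.prems by (simp add: cnt_def)
  qed
qed

lemma dlt_mono: "dlt n e p \<Longrightarrow> e \<le> e' \<Longrightarrow> dlt n e' p"
  unfolding dlt_def by fastforce

lemma tlp_dlt': "\<forall>x\<in>set xs. fst x < n \<Longrightarrow> dlt n e p \<Longrightarrow> dlt n e (tlp \<phi> xs p)"
  using tlp_dlt dlt_mono by (metis diff_le_self)

lemma tlp_top: "\<forall>x\<in>set xs. fst x < n \<Longrightarrow> dlt n (Suc d) p \<Longrightarrow> deg n b = d \<Longrightarrow>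
   tlp \<phi> xs p b = (\<Prod>x\<leftarrow>xs. \<phi> (fst x) - snd x) * p b"
proof (induction xs)
  case Nil then show ?case by simp
next
  case (Cons x xs)
  have fx: "fst x < n" and fxs: "\<forall>x\<in>set xs. fst x < n" using Cons.prems(1) by auto
  have d1: "dlt n (Suc d) (tlp \<phi> xs p)" using tlp_dlt'[OF fxs Cons.prems(2)] .
  have "tlp \<phi> (x#xs) p b = T \<phi> x (tlp \<phi> xs p) b" by simp
  also have "\<dots> = (\<phi> (fst x) - snd x) * tlp \<phi> xs p b"
    by (rule T_top[OF fx d1 Cons.prems(3)])
  also have "tlp \<phi> xs p b = (\<Prod>x\<leftarrow>xs. \<phi> (fst x) - snd x) * p b"
    by (rule Cons.IH[OF fxs Cons.prems(2,3)])
  finally show ?case by (simp add: mult.assoc)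
qed

lemma tlp_zero: "tlp \<phi> xs (\<lambda>_. 0) = (\<lambda>_. 0)"
  by (induction xs) (auto simp: T_def pderivX_def)

fun cf :: "nat list \<Rightarrow> (nat \<Rightarrow> nat) \<Rightarrow> nat" where
  "cf [] b = 1"
| "cf (i#is) b = Suc (b i) * cf is (b(i := Suc (b i)))"

fun addv :: "(nat \<Rightarrow> nat) \<Rightarrow> nat list \<Rightarrow> nat \<Rightarrow> nat" where
  "addv b [] = b"
| "addv b (i#is) = addv (b(i := Suc (b i))) is"

lemma cf_pos: "cf is b > 0"
  by (induction "is" arbitrary: b) auto

lemma addv_eq: "addv b is j = b j + count_list is j"
  by (induction "is" arbitrary: b) auto

lemma tlp_deriv: "\<forall>x\<in>set xs. \<phi> (fst x) = snd x \<Longrightarrow>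
   tlp \<phi> xs p b = of_nat (cf (map fst xs) b) * p (addv b (map fst xs))"
proof (induction xs arbitrary: b)
  case Nil then show ?case by simp
next
  case (Cons x xs)
  have e: "\<phi> (fst x) = snd x" and es: "\<forall>x\<in>set xs. \<phi> (fst x) = snd x" using Cons.prems by auto
  define b' where "b' = b(fst x := Suc (b (fst x)))"
  have "tlp \<phi> (x#xs) p b = T \<phi> x (tlp \<phi> xs p) b" by simp
  also have "\<dots> = of_nat (Suc (b (fst x))) * tlp \<phi> xs p b'"
    unfolding T_def pderivX_def b'_def using e by simp
  also have "tlp \<phi> xs p b' = of_nat (cf (map fst xs) b') * p (addv b' (map fst xs))"
    using Cons.IH[OF es] .
  finally show ?case by (simp add: b'_def mult.assoc distrib_right)
qed



definition Op :: "(nat \<Rightarrow> complex) list \<Rightarrow> nat \<times> complex \<Rightarrow> lelem \<Rightarrow> lelem" where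
  "Op phis x v = lin_add (lin_D phis (fst x) v) (lin_scale (- snd x) v)"

fun opl :: "(nat \<Rightarrow> complex) list \<Rightarrow> (nat \<times> complex) list \<Rightarrow> lelem \<Rightarrow> lelem" where
  "opl phis [] v = v"
| "opl phis (x#xs) v = Op phis x (opl phis xs v)"

lemma opl_in: "is_Dsub n phis N \<Longrightarrow> v \<in> N \<Longrightarrow> \<forall>x\<in>set xs. fst x < n \<Longrightarrow> opl phis xs v \<in> N"
  by (induction xs) (auto simp: Op_def is_Dsub_def)

lemma Op_comp: "k < length phis \<Longrightarrow> Op phis x v k = T (phis!k) x (v k)"
  unfolding Op_def lin_add_def lin_D_def lin_scale_def T_def twD_def
  by (auto simp: fun_eq_iff left_diff_distrib)

lemma opl_comp: "k < length phis \<Longrightarrow> opl phis xs v k = tlp (phis!k) xs (v k)"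
  by (induction xs) (auto simp: Op_comp)

definition cst :: "(nat \<Rightarrow> complex) \<Rightarrow> lelem" where
  "cst w = (\<lambda>k b. if b = (\<lambda>_. 0) then w k else 0)"

definition coef :: "lelem \<Rightarrow> (nat \<Rightarrow> nat) \<Rightarrow> nat \<Rightarrow> complex" where
  "coef v a = (\<lambda>k. v k a)"

definition trunc :: "nat \<Rightarrow> (nat \<Rightarrow> complex) \<Rightarrow> nat \<Rightarrow> complex" where
  "trunc n \<phi> = (\<lambda>i. if i < n then \<phi> i else 0)"

definition Reps :: "nat \<Rightarrow> (nat \<Rightarrow> complex) list \<Rightarrow> (nat \<Rightarrow> complex) set" where
  "Reps n phis = (\<lambda>k. trunc n (phis!k)) ` {..<length phis}"

definition R :: "nat \<Rightarrow> (nat \<Rightarrow> complex) list \<Rightarrow> (nat \<Rightarrow> complex) \<Rightarrow> (nat \<Rightarrow> complex) \<Rightarrow> nat \<Rightarrow> complex" where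
  "R n phis \<psi> w = (\<lambda>k. if k < length phis \<and> trunc n (phis!k) = \<psi> then w k else 0)"

lemma conc_filter: "x \<in> set L \<Longrightarrow> length (filter P (f x)) \<le> length (filter P (concat (map f L)))"
  by (induction L) auto

lemma count_rep: "count_list (replicate k j) j' = (if j = j' then k else 0)"
  by (induction k) auto

lemma count_is: "count_list (concat (map (\<lambda>j. replicate (a j) j) [0..<n])) j = (if j < n then a j else 0)"
  by (induction n) (auto simp: count_rep)

lemma deg_add: "deg n (\<lambda>j. b j + c j) = deg n b + deg n c"
  unfolding deg_def by (simp add: sum.distrib)

lemma deg_pos: "j < n \<Longrightarrow> b j \<noteq> 0 \<Longrightarrow> deg n b > 0"
  unfolding deg_def by (metis bot_nat_0.not_eq_extremum finite_lessThan lessThan_iff sum_pos2 zero_le)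

lemma in_carrier: "is_Dsub n phis N \<Longrightarrow> v \<in> N \<Longrightarrow> v \<in> lin_carrier n phis"
  unfolding is_Dsub_def by blast

lemma core:
  assumes D: "is_Dsub n phis N" and v: "v \<in> N"
    and mx: "\<forall>k b. v k b \<noteq> 0 \<longrightarrow> deg n b \<le> deg n a"
    and az: "\<forall>i\<ge>n. a i = 0" and ps: "\<psi> \<in> Reps n phis"
  shows "cst (R n phis \<psi> (coef v a)) \<in> N"
proof -
  define m where "m = length phis"
  define d where "d = deg n a"
  define L where "L = filter (\<lambda>\<chi>. \<chi> \<noteq> \<psi>) (map (\<lambda>k. trunc n (phis!k)) [0..<m])"
  define idx where "idx \<chi> = (SOME i. i < n \<and> \<psi> i \<noteq> \<chi> i)" for \<chi> :: "nat \<Rightarrow> complex"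
  define xs1 where "xs1 = concat (map (\<lambda>\<chi>. replicate (Suc d) (idx \<chi>, \<chi> (idx \<chi>))) L)"
  define "is" where "is = concat (map (\<lambda>j. replicate (a j) j) [0..<n])"
  define xs2 where "xs2 = map (\<lambda>i. (i, \<psi> i)) is"
  define u where "u = opl phis xs2 (opl phis xs1 v)"
  define \<kappa> where "\<kappa> = of_nat (cf is (\<lambda>_. 0)) * (\<Prod>x\<leftarrow>xs1. \<psi> (fst x) - snd x)"
  obtain k0 where k0: "k0 < m" "\<psi> = trunc n (phis!k0)" using ps unfolding Reps_def m_def by auto
  have idx: "idx \<chi> < n \<and> \<psi> (idx \<chi>) \<noteq> \<chi> (idx \<chi>)" if "\<chi> \<in> set L" for \<chi>
  proof -
    from that obtain k where "\<chi> = trunc n (phis!k)" "\<chi> \<noteq> \<psi>" unfolding L_def by auto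
    then obtain i where "\<psi> i \<noteq> \<chi> i" by (metis ext)
    then have "i < n \<and> \<psi> i \<noteq> \<chi> i" using k0 \<open>\<chi> = trunc n (phis!k)\<close> by (auto simp: trunc_def split: if_splits)
    then show ?thesis unfolding idx_def by (rule someI)
  qed
  have f1: "\<forall>x\<in>set xs1. fst x < n" unfolding xs1_def using idx by auto
  have f2: "\<forall>x\<in>set xs2. fst x < n" unfolding xs2_def is_def by auto
  have uN: "u \<in> N" unfolding u_def using opl_in[OF D opl_in[OF D v f1] f2] .
  have pnz: "(\<Prod>x\<leftarrow>xs1. \<psi> (fst x) - snd x) \<noteq> 0"
    unfolding prod_list_zero_iff xs1_def using idx by auto
  have knz: "\<kappa> \<noteq> 0" unfolding \<kappa>_def using pnz cf_pos[of "is" "\<lambda>_. 0"] by simp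
  have vc: "v \<in> lin_carrier n phis" using in_carrier[OF D v] .
  have uc: "u \<in> lin_carrier n phis" using in_carrier[OF D uN] .
  have ucomp: "u k b = (if b = (\<lambda>_. 0) then \<kappa> * R n phis \<psi> (coef v a) k else 0)" for k b
  proof (cases "k < m")
    case False
    then show ?thesis using uc unfolding lin_carrier_def R_def m_def by auto
  next
    case True
    define \<phi> where "\<phi> = phis!k"
    define p1 where "p1 = tlp \<phi> xs1 (v k)"
    have uk: "u k = tlp \<phi> xs2 p1" unfolding u_def p1_def \<phi>_def
      using True opl_comp m_def by simp
    have vkp: "v k \<in> polys n" using vc True unfolding lin_carrier_def m_def by auto
    have dv: "dlt n (Suc d) (v k)" using mx unfolding dlt_def d_def by (simp add: less_Suc_eq_le)
    have p1p: "p1 \<in> polys n" unfolding p1_def using tlp_polys[OF f1 vkp] .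
    show ?thesis
    proof (cases "trunc n \<phi> = \<psi>")
      case True2: True
      have h\<phi>: "\<phi> i = \<psi> i" if "i < n" for i
      proof -
        have "trunc n \<phi> i = \<psi> i" using True2 by simp
        then show ?thesis using that by (simp add: trunc_def)
      qed
      have prodeq: "(\<Prod>x\<leftarrow>xs1. \<phi> (fst x) - snd x) = (\<Prod>x\<leftarrow>xs1. \<psi> (fst x) - snd x)"
        by (rule arg_cong[where f=prod_list], rule map_cong) (use f1 h\<phi> in auto)
      have x2: "\<forall>x\<in>set xs2. \<phi> (fst x) = snd x" using f2 h\<phi> unfolding xs2_def by auto
      have mf: "map fst xs2 = is" unfolding xs2_def by (simp add: comp_def)
      have uk2: "u k b = of_nat (cf is b) * p1 (addv b is)"
        using uk tlp_deriv[OF x2] mf by simp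
      have av: "addv b' is j = b' j + (if j < n then a j else 0)" for j b'
        using addv_eq count_is unfolding is_def by simp
      show ?thesis
      proof (cases "b = (\<lambda>_. 0)")
        case True3: True
        have "addv b is = a" unfolding True3 fun_eq_iff
        proof
          fix j show "addv (\<lambda>_. 0) is j = a j" using av[of "\<lambda>_. 0" j] az by (cases "j < n") auto
        qed
        moreover have "p1 a = (\<Prod>x\<leftarrow>xs1. \<phi> (fst x) - snd x) * v k a"
          unfolding p1_def by (rule tlp_top[OF f1 dv]) (simp add: d_def)
        ultimately show ?thesis using uk2 True3 True True2 prodeq
          by (simp add: \<kappa>_def R_def coef_def m_def \<phi>_def mult.assoc)
      next
        case False3: False
        then obtain j where bj: "b j \<noteq> 0" by (auto simp: fun_eq_iff)
        have "p1 (addv b is) = 0"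
        proof (cases "j < n")
          case True4: True
          have "deg n (addv b is) = deg n b + deg n a"
          proof -
            have "deg n (addv b is) = deg n (\<lambda>j. b j + a j)"
              unfolding deg_def using av by (intro sum.cong) auto
            then show ?thesis using deg_add by simp
          qed
          moreover have "deg n b > 0" using deg_pos[of j n b] True4 bj by simp
          ultimately have "\<not> deg n (addv b is) < Suc d" unfolding d_def by simp
          then show ?thesis using tlp_dlt'[OF f1 dv] unfolding p1_def dlt_def by blast
        next
          case False4: False
          then have "addv b is j \<noteq> 0" using av bj by simp
          then show ?thesis using p1p False4 unfolding polys_def by auto
        qed
        then show ?thesis using uk2 False3 by simp
      qed
    next
      case False2: False
      have chi: "trunc n \<phi> \<in> set L" unfolding L_def using False2 True \<phi>_def by auto
      have "Suc d \<le> cnt \<phi> xs1"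
      proof -
        have "length (filter (\<lambda>x. \<phi> (fst x) = snd x) (replicate (Suc d) (idx (trunc n \<phi>), trunc n \<phi> (idx (trunc n \<phi>))))) = Suc d"
          using idx[OF chi] by (simp add: trunc_def)
        then show ?thesis unfolding cnt_def xs1_def
          using conc_filter[OF chi, of "\<lambda>x. \<phi> (fst x) = snd x" "\<lambda>\<chi>. replicate (Suc d) (idx \<chi>, \<chi> (idx \<chi>))"]
          by simp
      qed
      then have "dlt n 0 p1" using tlp_dlt[OF f1 dv, of \<phi>] unfolding p1_def by simp
      then have "p1 = (\<lambda>_. 0)" unfolding dlt_def by auto
      then have "u k = (\<lambda>_. 0)" using uk tlp_zero by simp
      then show ?thesis using False2 unfolding R_def \<phi>_def by simp
    qed
  qed
  have "cst (R n phis \<psi> (coef v a)) = lin_scale (1 / \<kappa>) u"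
    using knz unfolding lin_scale_def cst_def by (auto simp: fun_eq_iff ucomp)
  then show ?thesis using uN D unfolding is_Dsub_def by auto
qed



lemma sum_apply: "(sum g F) x = (\<Sum>y\<in>F. g y x)"
  by (induction F rule: infinite_finite_induct) auto

lemma lin_add_plus: "lin_add v w = v + w"
  unfolding lin_add_def by (simp add: fun_eq_iff)

lemma lin_zero_0: "lin_zero = 0"
  unfolding lin_zero_def by (simp add: fun_eq_iff)

lemma N_sum: assumes D: "is_Dsub n phis N"
  shows "finite F \<Longrightarrow> (\<forall>x\<in>F. g x \<in> N) \<Longrightarrow> sum g F \<in> N"
proof (induction F rule: finite_induct)
  case empty then show ?case using D by (simp add: is_Dsub_def lin_zero_def)
next
  case (insert x F)
  then have "sum g (insert x F) = lin_add (g x) (sum g F)" by (simp only: sum.insert[OF insert.hyps(1,2)] lin_add_plus)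
  then show ?case using D insert unfolding is_Dsub_def by auto
qed

lemma cst_add: "cst (w1 + w2) = cst w1 + cst w2"
  unfolding cst_def by (simp add: fun_eq_iff)

lemma cst_zero: "cst 0 = 0"
  unfolding cst_def by (simp add: fun_eq_iff)

lemma cst_sum: "cst (sum g F) = (\<Sum>x\<in>F. cst (g x))"
proof (induction F rule: infinite_finite_induct)
  case (infinite A)
  then have "sum g A = 0" "(\<Sum>x\<in>A. cst (g x)) = 0" by auto
  then show ?case by (simp only: cst_zero)
next
  case empty then show ?case by (simp only: sum.empty cst_zero)
next
  case (insert x F) then show ?case by (simp only: sum.insert[OF insert.hyps(1,2)] cst_add insert.IH)
qed

lemma decomp: "\<forall>k\<ge>length phis. w k = 0 \<Longrightarrow> w = (\<Sum>\<psi>\<in>Reps n phis. R n phis \<psi> w)"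
proof
  fix k assume z: "\<forall>k\<ge>length phis. w k = 0"
  have fin: "finite (Reps n phis)" unfolding Reps_def by simp
  show "w k = (\<Sum>\<psi>\<in>Reps n phis. R n phis \<psi> w) k"
  proof (cases "k < length phis")
    case True
    have "(\<Sum>\<psi>\<in>Reps n phis. R n phis \<psi> w) k = (\<Sum>\<psi>\<in>Reps n phis. if trunc n (phis!k) = \<psi> then w k else 0)"
      unfolding sum_apply R_def using True by simp
    also have "\<dots> = w k" using fin True by (simp add: sum.delta Reps_def)
    finally show ?thesis by simp
  next
    case False then show ?thesis using z by (simp add: sum_apply R_def)
  qed
qed

lemma coef_top:
  assumes D: "is_Dsub n phis N" and v: "v \<in> N"
    and mx: "\<forall>k b. v k b \<noteq> 0 \<longrightarrow> deg n b \<le> deg n a"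
    and az: "\<forall>i\<ge>n. a i = 0"
  shows "cst (coef v a) \<in> N"
proof -
  have "\<forall>k\<ge>length phis. coef v a k = 0"
    using in_carrier[OF D v] unfolding lin_carrier_def coef_def by auto
  then have "cst (coef v a) = (\<Sum>\<psi>\<in>Reps n phis. cst (R n phis \<psi> (coef v a)))"
    using decomp cst_sum by metis
  also have "\<dots> \<in> N"
  proof (rule N_sum[OF D])
    show "finite (Reps n phis)" unfolding Reps_def by simp
    show "\<forall>\<psi>\<in>Reps n phis. cst (R n phis \<psi> (coef v a)) \<in> N" using core[OF D v mx az] by blast
  qed
  finally show ?thesis .
qed

definition mnm :: "(nat \<Rightarrow> nat) \<Rightarrow> (nat \<Rightarrow> complex) \<Rightarrow> lelem" where
  "mnm a w = (\<lambda>k b. if b = a then w k else 0)"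

lemma deg_zero: "deg n a = 0 \<Longrightarrow> \<forall>i\<ge>n. a i = 0 \<Longrightarrow> a = (\<lambda>_. 0)"
proof
  fix i assume d: "deg n a = 0" and z: "\<forall>i\<ge>n. a i = 0"
  show "a i = 0"
  proof (cases "i < n")
    case True then show ?thesis using d unfolding deg_def by simp
  qed (use z in auto)
qed

lemma mnm_in:
  assumes D: "is_Dsub n phis N" and w: "cst w \<in> N"
  shows "\<forall>i\<ge>n. a i = 0 \<Longrightarrow> mnm a w \<in> N"
proof (induction "deg n a" arbitrary: a)
  case 0
  then have "a = (\<lambda>_. 0)" using deg_zero by metis
  then have "mnm a w = cst w" unfolding mnm_def cst_def by simp
  then show ?case using w by simp
next
  case (Suc e)
  have "\<exists>i<n. a i > 0"
  proof (rule ccontr)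
    assume "\<not> ?thesis"
    then have "deg n a = 0" unfolding deg_def by simp
    then show False using Suc.hyps(2) by simp
  qed
  then obtain i where i: "i < n" "a i > 0" by blast
  define a' where "a' = a(i := a i - 1)"
  have aa: "a = a'(i := Suc (a' i))" unfolding a'_def using i by auto
  have "deg n a' = e" using deg_upd[OF i(1), of a'] aa Suc.hyps(2) by simp
  moreover have "\<forall>j\<ge>n. a' j = 0" using Suc.prems i unfolding a'_def by auto
  ultimately have IH: "mnm a' w \<in> N" using Suc.hyps(1) by metis
  have "mnm a w = lin_X i (mnm a' w)"
  proof (intro ext)
    fix k b
    have "(b i \<noteq> 0 \<and> b(i := b i - 1) = a') \<longleftrightarrow> b = a"
    proof
      assume h: "b i \<noteq> 0 \<and> b(i := b i - 1) = a'"
      show "b = a"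
      proof
        fix j
        have "(b(i := b i - 1)) j = a' j" using h by simp
        then show "b j = a j" using h i unfolding a'_def by (cases "j = i") auto
      qed
    next
      assume "b = a"
      then show "b i \<noteq> 0 \<and> b(i := b i - 1) = a'" using i unfolding a'_def by simp
    qed
    then show "mnm a w k b = lin_X i (mnm a' w) k b"
      unfolding mnm_def lin_X_def mulX_def by auto
  qed
  then show ?case using IH D i unfolding is_Dsub_def by auto
qed

definition supp :: "lelem \<Rightarrow> (nat \<Rightarrow> nat) set" where
  "supp v = {a. \<exists>k. v k a \<noteq> 0}"

lemma supp_finite: "v \<in> lin_carrier n phis \<Longrightarrow> finite (supp v)"
proof -
  assume v: "v \<in> lin_carrier n phis"
  have "supp v \<subseteq> (\<Union>k<length phis. {a. v k a \<noteq> 0})"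
    using v unfolding supp_def lin_carrier_def by (auto simp: not_less[symmetric])
  moreover have "finite (\<Union>k<length phis. {a. v k a \<noteq> 0})"
    using v unfolding lin_carrier_def polys_def by auto
  ultimately show ?thesis using finite_subset by blast
qed

lemma supp_az: "v \<in> lin_carrier n phis \<Longrightarrow> a \<in> supp v \<Longrightarrow> \<forall>i\<ge>n. a i = 0"
proof -
  assume v: "v \<in> lin_carrier n phis" and a: "a \<in> supp v"
  then obtain k where k: "v k a \<noteq> 0" unfolding supp_def by auto
  have "k < length phis"
  proof (rule ccontr)
    assume "\<not> k < length phis"
    then have "v k = (\<lambda>_. 0)" using v unfolding lin_carrier_def by auto
    then show False using k by simp
  qed
  then have "v k \<in> polys n" using v unfolding lin_carrier_def by auto
  then show ?thesis using k unfolding polys_def by auto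
qed

lemma coefs_in:
  assumes D: "is_Dsub n phis N"
  shows "v \<in> N \<Longrightarrow> cst (coef v a) \<in> N"
proof (induction "card (supp v)" arbitrary: v a rule: less_induct)
  case less
  have vc: "v \<in> lin_carrier n phis" using in_carrier[OF D less.prems] .
  have fin: "finite (supp v)" using supp_finite[OF vc] .
  show ?case
  proof (cases "supp v = {}")
    case True
    then have "coef v a = 0" unfolding supp_def coef_def by (auto simp: fun_eq_iff)
    then show ?thesis using D cst_zero lin_zero_0 unfolding is_Dsub_def by simp
  next
    case False
    define M where "M = Max (deg n ` supp v)"
    have "M \<in> deg n ` supp v" unfolding M_def using fin False by simp
    then obtain a0 where a0: "a0 \<in> supp v" "deg n a0 = M" by auto
    have "\<forall>b\<in>supp v. deg n b \<le> M" using fin unfolding M_def by simp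
    then have mx: "\<forall>k b. v k b \<noteq> 0 \<longrightarrow> deg n b \<le> deg n a0"
      using a0(2) unfolding supp_def by auto
    have az: "\<forall>i\<ge>n. a0 i = 0" using supp_az[OF vc a0(1)] .
    have c0: "cst (coef v a0) \<in> N" using coef_top[OF D less.prems mx az] .
    have m0: "mnm a0 (coef v a0) \<in> N" using mnm_in[OF D c0 az] .
    define v' where "v' = lin_add v (lin_scale (-1) (mnm a0 (coef v a0)))"
    have v'N: "v' \<in> N" using D less.prems m0 unfolding v'_def is_Dsub_def by auto
    have v'e: "v' k b = (if b = a0 then 0 else v k b)" for k b
      unfolding v'_def lin_add_def lin_scale_def mnm_def coef_def by simp
    have "supp v' = supp v - {a0}" unfolding supp_def using v'e by auto
    then have "card (supp v') < card (supp v)" using fin a0(1) card_Diff1_less by metis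
    then have IH: "cst (coef v' a) \<in> N" for a using less.hyps v'N by blast
    show ?thesis
    proof (cases "a = a0")
      case True then show ?thesis using c0 by simp
    next
      case False
      then have "coef v' a = coef v a" unfolding coef_def using v'e by simp
      then show ?thesis using IH by metis
    qed
  qed
qed

lemma coefs_out:
  assumes D: "is_Dsub n phis N" and vc: "v \<in> lin_carrier n phis"
    and c: "\<forall>a. cst (coef v a) \<in> N"
  shows "v \<in> N"
proof -
  have fin: "finite (supp v)" using supp_finite[OF vc] .
  have "v = (\<Sum>a\<in>supp v. mnm a (coef v a))"
  proof (intro ext)
    fix k b
    have "(\<Sum>a\<in>supp v. mnm a (coef v a)) k b = (\<Sum>a\<in>supp v. mnm a (coef v a) k b)"
      by (simp only: sum_apply)
    also have "\<dots> = (\<Sum>a\<in>supp v. if b = a then v k b else 0)"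
      by (rule sum.cong) (auto simp: mnm_def coef_def)
    also have "\<dots> = (if b \<in> supp v then v k b else 0)"
      using fin by (rule sum.delta')
    also have "\<dots> = v k b" by (auto simp: supp_def)
    finally show "v k b = (\<Sum>a\<in>supp v. mnm a (coef v a)) k b" by (rule sym)
  qed
  also have "\<dots> \<in> N"
  proof (rule N_sum[OF D fin], rule ballI)
    fix a assume "a \<in> supp v"
    then have "\<forall>i\<ge>n. a i = 0" using supp_az[OF vc] by blast
    then show "mnm a (coef v a) \<in> N" using mnm_in[OF D] c by blast
  qed
  finally show ?thesis .
qed



definition sc :: "complex \<Rightarrow> (nat \<Rightarrow> complex) \<Rightarrow> (nat \<Rightarrow> complex)" where
  "sc c w = (\<lambda>k. c * w k)"

interpretation V: vector_space sc
  by unfold_locales (simp_all add: sc_def fun_eq_iff distrib_left distrib_right mult.assoc)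

interpretation VP: vector_space_pair sc sc ..

definition pure :: "nat \<Rightarrow> (nat \<Rightarrow> complex) list \<Rightarrow> (nat \<Rightarrow> complex) set" where
  "pure n phis = {b. \<forall>k k'. b k \<noteq> 0 \<longrightarrow> b k' \<noteq> 0 \<longrightarrow> (\<forall>i<n. (phis!k) i = (phis!k') i)}"

definition Lam :: "(nat \<Rightarrow> complex) list \<Rightarrow> nat \<Rightarrow> (nat \<Rightarrow> complex) \<Rightarrow> nat \<Rightarrow> complex" where
  "Lam phis i w = (\<lambda>k. if k < length phis then (phis!k) i * w k else w k)"

definition ev :: "nat \<Rightarrow> nat \<Rightarrow> complex" where
  "ev k = (\<lambda>j. if j = k then 1 else 0)"

lemma sc_apply: "sc c w k = c * w k" by (simp add: sc_def)

lemma sum_sc_apply: "(\<Sum>b\<in>B. sc (u b) (f b)) k = (\<Sum>b\<in>B. u b * f b k)"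
  by (simp add: sum_apply sc_apply)

lemma labp_lem:
  assumes bne: "b \<noteq> 0" and bp: "b \<in> pure n phis" and bz: "\<forall>k\<ge>length phis. b k = 0" and i: "i < n"
  shows "Lam phis i b = sc ((phis ! (SOME k. b k \<noteq> 0)) i) b"
proof
  fix k
  have "\<exists>k. b k \<noteq> 0"
  proof (rule ccontr)
    assume "\<not> (\<exists>k. b k \<noteq> 0)"
    then have "b = 0" by (simp add: fun_eq_iff)
    then show False using bne by simp
  qed
  then have k0: "b (SOME k. b k \<noteq> 0) \<noteq> 0" by (rule someI_ex)
  show "Lam phis i b k = sc ((phis ! (SOME k. b k \<noteq> 0)) i) b k"
  proof (cases "b k = 0")
    case True then show ?thesis by (simp add: Lam_def sc_def)
  next
    case False
    have kl: "k < length phis"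
    proof (rule ccontr)
      assume "\<not> k < length phis"
      then have "length phis \<le> k" by simp
      then have "b k = 0" using bz by blast
      then show False using False by simp
    qed
    have H: "\<forall>k k'. b k \<noteq> 0 \<longrightarrow> b k' \<noteq> 0 \<longrightarrow> (\<forall>i<n. (phis!k) i = (phis!k') i)"
      using bp unfolding pure_def mem_Collect_eq .
    have eq: "(phis!k) i = (phis ! (SOME k. b k \<noteq> 0)) i" using H[rule_format, OF False k0 i] .
    show ?thesis using kl eq by (simp add: Lam_def sc_def)
  qed
qed

lemma linalg:
  fixes n :: nat and phis :: "(nat \<Rightarrow> complex) list" and W1 W2 :: "(nat \<Rightarrow> complex) set"
  assumes s1: "V.subspace W1" and s2: "V.subspace W2" and sub: "W2 \<subseteq> W1"
    and bd: "\<forall>w\<in>W1. \<forall>k\<ge>length phis. w k = 0"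
    and sp1: "W1 \<subseteq> V.span (W1 \<inter> pure n phis)" and sp2: "W2 \<subseteq> V.span (W2 \<inter> pure n phis)"
  shows "\<exists>psis L. Vector_Spaces.linear sc sc L \<and> (\<forall>w\<in>W1. \<forall>j\<ge>length psis. L w j = 0) \<and>
     (\<forall>y. (\<forall>j\<ge>length psis. y j = 0) \<longrightarrow> (\<exists>w\<in>W1. L w = y)) \<and>
     (\<forall>w\<in>W1. L w = 0 \<longleftrightarrow> w \<in> W2) \<and>
     (\<forall>i<n. \<forall>w\<in>W1. L (Lam phis i w) = Lam psis i (L w))"
proof -
  define m where "m = length phis"
  define P where "P = pure n phis"
  obtain B2 where B20: "{} \<subseteq> B2" and B2: "B2 \<subseteq> W2 \<inter> P" "V.independent B2" "W2 \<inter> P \<subseteq> V.span B2"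
    by (rule V.maximal_independent_subset_extend[OF empty_subsetI V.independent_empty])
  have W2B2: "W2 \<subseteq> V.span B2"
    using sp2 V.span_mono[OF B2(3)] V.span_span unfolding P_def by blast
  have B2W2: "V.span B2 \<subseteq> W2" using V.span_minimal[OF _ s2] B2(1) by blast
  have B2W1: "B2 \<subseteq> W1 \<inter> P" using B2(1) sub by blast
  obtain B1 where B1: "B2 \<subseteq> B1" "B1 \<subseteq> W1 \<inter> P" "V.independent B1" "W1 \<inter> P \<subseteq> V.span B1"
    by (rule V.maximal_independent_subset_extend[OF B2W1 B2(2)])
  have W1B1: "W1 \<subseteq> V.span B1"
    using sp1 V.span_mono[OF B1(4)] V.span_span unfolding P_def by blast
  have B1W1: "V.span B1 \<subseteq> W1" using V.span_minimal[OF _ s1] B1(2) by blast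
  define E where "E = ev ` {..<m}"
  have WE: "W1 \<subseteq> V.span E"
  proof
    fix w assume w: "w \<in> W1"
    have "w = (\<Sum>k<m. sc (w k) (ev k))"
    proof
      fix j
      have "(\<Sum>k<m. sc (w k) (ev k)) j = (\<Sum>k<m. if j = k then w j else 0)"
        unfolding sum_sc_apply by (rule sum.cong) (auto simp: ev_def)
      also have "\<dots> = w j" using bd w unfolding m_def by (auto simp: sum.delta)
      finally show "w j = (\<Sum>k<m. sc (w k) (ev k)) j" by simp
    qed
    also have "\<dots> \<in> V.span E"
      unfolding E_def by (intro V.span_sum V.span_scale V.span_base) auto
    finally show "w \<in> V.span E" .
  qed
  have finB1: "finite B1"
    using V.independent_span_bound[of E B1] B1 WE unfolding E_def by auto
  have finB2: "finite B2" using finB1 B1(1) finite_subset by blast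
  have nz: "0 \<notin> B1" using B1(3) V.dependent_zero by blast
  define C where "C = B1 - B2"
  obtain cl where cl: "set cl = C" "distinct cl" using finite_distinct_list[of C] finB1 unfolding C_def by auto
  define d where "d = length cl"
  define lab where "lab b = phis ! (SOME k. b k \<noteq> 0)" for b :: "nat \<Rightarrow> complex"
  define psis where "psis = map lab cl"
  define g where "g b = (\<lambda>j. if j < d \<and> cl!j = b then 1 else (0::complex))" for b :: "nat \<Rightarrow> complex"
  define L where "L = VP.construct B1 g"
  have lin: "Vector_Spaces.linear sc sc L" unfolding L_def by (rule VP.linear_construct[OF B1(3)])
  interpret Ll: Vector_Spaces.linear sc sc L by (rule lin)
  have Lb: "L b = g b" if "b \<in> B1" for b unfolding L_def by (rule VP.construct_basis[OF B1(3) that])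
  have clB1: "cl!j \<in> B1" "cl!j \<notin> B2" if "j < d" for j
    using cl that nth_mem[of j cl] unfolding d_def C_def by auto
  have Lform: "L (\<Sum>b\<in>B1. sc (u b) b) = (\<lambda>j. if j < d then u (cl!j) else 0)" for u
  proof
    fix j
    have "L (\<Sum>b\<in>B1. sc (u b) b) = (\<Sum>b\<in>B1. sc (u b) (g b))"
      by (simp add: Ll.sum Ll.scale Lb)
    then have "L (\<Sum>b\<in>B1. sc (u b) b) j = (\<Sum>b\<in>B1. if j < d \<and> cl!j = b then u b else 0)"
      by (auto simp: sum_sc_apply g_def intro!: sum.cong)
    also have "\<dots> = (if j < d then u (cl!j) else 0)"
    proof (cases "j < d")
      case True
      then have "(\<Sum>b\<in>B1. if j < d \<and> cl!j = b then u b else 0) = (\<Sum>b\<in>B1. if cl!j = b then u b else 0)"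
        by simp
      also have "\<dots> = u (cl!j)" using finB1 clB1[OF True] by (simp add: sum.delta)
      finally show ?thesis using True by simp
    qed simp
    finally show "L (\<Sum>b\<in>B1. sc (u b) b) j = (if j < d then u (cl!j) else 0)" .
  qed
  have rep: "\<exists>u. w = (\<Sum>b\<in>B1. sc (u b) b)" if "w \<in> W1" for w
    using W1B1 that V.span_finite[OF finB1] by auto
  have gcl: "g (cl!j) = ev j" if "j < d" for j
  proof
    fix j'
    show "g (cl!j) j' = ev j j'"
      using that cl(2) nth_eq_iff_index_eq[of cl j' j] unfolding g_def ev_def d_def by auto
  qed
  have P1: "\<forall>w\<in>W1. \<forall>j\<ge>length psis. L w j = 0"
  proof (intro ballI allI impI)
    fix w j assume "w \<in> W1" "length psis \<le> j"
    then obtain u where "w = (\<Sum>b\<in>B1. sc (u b) b)" using rep by blast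
    then show "L w j = 0" using Lform \<open>length psis \<le> j\<close> unfolding psis_def d_def by simp
  qed
  have P2: "\<forall>y. (\<forall>j\<ge>length psis. y j = 0) \<longrightarrow> (\<exists>w\<in>W1. L w = y)"
  proof (intro allI impI)
    fix y :: "nat \<Rightarrow> complex" assume y: "\<forall>j\<ge>length psis. y j = 0"
    define w where "w = (\<Sum>j<d. sc (y j) (cl!j))"
    have "w \<in> V.span B1" unfolding w_def
      by (intro V.span_sum V.span_scale V.span_base) (use clB1 in auto)
    then have "w \<in> W1" using B1W1 by blast
    moreover have "L w = y"
    proof
      fix j'
      have Lw: "L w = (\<Sum>j<d. sc (y j) (ev j))" unfolding w_def
        by (simp add: Ll.sum Ll.scale Lb clB1 gcl)
      have "L w j' = (\<Sum>j<d. y j * ev j j')" by (simp only: Lw sum_sc_apply)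
      also have "\<dots> = (\<Sum>j<d. if j' = j then y j' else 0)"
        by (rule sum.cong) (auto simp: ev_def)
      also have "\<dots> = y j'" using y unfolding psis_def d_def by (auto simp: sum.delta)
      finally show "L w j' = y j'" .
    qed
    ultimately show "\<exists>w\<in>W1. L w = y" by blast
  qed
  have P3: "\<forall>w\<in>W1. L w = 0 \<longleftrightarrow> w \<in> W2"
  proof (intro ballI iffI)
    fix w assume w: "w \<in> W1" and L0: "L w = 0"
    obtain u where u: "w = (\<Sum>b\<in>B1. sc (u b) b)" using rep[OF w] by blast
    have uC: "u b = 0" if "b \<in> C" for b
    proof -
      have "b \<in> set cl" using that cl(1) by simp
      then obtain j where j: "j < d" "cl!j = b" unfolding d_def in_set_conv_nth by blast
      have "L w j = u (cl!j)" using Lform u j by simp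
      then show ?thesis using L0 j by simp
    qed
    have "w = (\<Sum>b\<in>B2. sc (u b) b)" unfolding u
      by (rule sum.mono_neutral_right[OF finB1 B1(1)]) (use uC in \<open>auto simp: C_def sc_def fun_eq_iff\<close>)
    also have "\<dots> \<in> V.span B2" by (intro V.span_sum V.span_scale V.span_base)
    finally show "w \<in> W2" using B2W2 by blast
  next
    fix w assume w: "w \<in> W2"
    then obtain u where u: "w = (\<Sum>b\<in>B2. sc (u b) b)" using W2B2 V.span_finite[OF finB2] by auto
    have "g b = 0" if "b \<in> B2" for b
    proof
      fix j
      have "\<not> (j < d \<and> cl!j = b)" using that clB1 by metis
      then show "g b j = 0 j" unfolding g_def by simp
    qed
    then show "L w = 0" unfolding u using B1(1)
      by (simp add: Ll.sum Ll.scale Lb subsetD)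
  qed
  have labp: "Lam phis i b = sc (lab b i) b" if "b \<in> B1" "i < n" for b i
  proof -
    have "b \<noteq> 0" using that nz by blast
    moreover have "b \<in> pure n phis" using B1(2) that(1) unfolding P_def by blast
    moreover have "\<forall>k\<ge>length phis. b k = 0" using bd B1(2) that(1) by blast
    ultimately show ?thesis unfolding lab_def using labp_lem that(2) by blast
  qed
  have P4: "\<forall>i<n. \<forall>w\<in>W1. L (Lam phis i w) = Lam psis i (L w)"
  proof (intro allI impI ballI)
    fix i w assume i: "i < n" and w: "w \<in> W1"
    obtain u where u: "w = (\<Sum>b\<in>B1. sc (u b) b)" using rep[OF w] by blast
    have "Lam phis i w = (\<Sum>b\<in>B1. sc (u b) (Lam phis i b))"
    proof
      fix k
      show "Lam phis i w k = (\<Sum>b\<in>B1. sc (u b) (Lam phis i b)) k"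
        unfolding u sum_sc_apply Lam_def by (simp add: sum_distrib_left mult.left_commute)
    qed
    also have "\<dots> = (\<Sum>b\<in>B1. sc (u b * lab b i) b)"
      by (rule sum.cong) (auto simp: labp i sc_def fun_eq_iff)
    finally have "L (Lam phis i w) = (\<lambda>j. if j < d then u (cl!j) * lab (cl!j) i else 0)"
      using Lform by simp
    moreover have "L w = (\<lambda>j. if j < d then u (cl!j) else 0)" using Lform u by simp
    ultimately show "L (Lam phis i w) = Lam psis i (L w)"
      unfolding Lam_def psis_def d_def by (auto simp: fun_eq_iff)
  qed
  show ?thesis using lin P1 P2 P3 P4 by blast
qed



lemma coef_add: "coef (lin_add v w) b = coef v b + coef w b"
  unfolding coef_def lin_add_def by (simp add: fun_eq_iff)

lemma coef_scale: "coef (lin_scale c v) b = sc c (coef v b)"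
  unfolding coef_def lin_scale_def sc_def by simp

lemma coef_X: "coef (lin_X i v) b = (if b i = 0 then 0 else coef v (b(i := b i - 1)))"
  unfolding coef_def lin_X_def mulX_def by (simp add: fun_eq_iff)

lemma coef_D:
  assumes vc: "v \<in> lin_carrier n phis"
  shows "coef (lin_D phis i v) b = sc (of_nat (b i + 1)) (coef v (b(i := b i + 1))) + Lam phis i (coef v b)"
proof
  fix k
  show "coef (lin_D phis i v) b k = (sc (of_nat (b i + 1)) (coef v (b(i := b i + 1))) + Lam phis i (coef v b)) k"
  proof (cases "k < length phis")
    case True then show ?thesis
      unfolding coef_def lin_D_def twD_def pderivX_def sc_def Lam_def by simp
  next
    case False
    then have "v k = (\<lambda>_. 0)" using vc unfolding lin_carrier_def by auto
    then show ?thesis using False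
      unfolding coef_def lin_D_def twD_def pderivX_def sc_def Lam_def by simp
  qed
qed

lemma cst_sc: "cst (sc c w) = lin_scale c (cst w)"
  unfolding cst_def sc_def lin_scale_def by (simp add: fun_eq_iff)

lemma coef_cst: "coef (cst w) (\<lambda>_. 0) = w"
  unfolding coef_def cst_def by simp

lemma W_subspace:
  assumes D: "is_Dsub n phis N"
  shows "V.subspace {w. cst w \<in> N}"
  unfolding V.subspace_def
proof (intro conjI ballI allI)
  show "0 \<in> {w. cst w \<in> N}" using D cst_zero lin_zero_0 unfolding is_Dsub_def by simp
next
  fix x y assume "x \<in> {w. cst w \<in> N}" "y \<in> {w. cst w \<in> N}"
  then show "x + y \<in> {w. cst w \<in> N}" using D cst_add lin_add_plus unfolding is_Dsub_def by simp
next
  fix c x assume "x \<in> {w. cst w \<in> N}"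
  then show "sc c x \<in> {w. cst w \<in> N}" using D cst_sc unfolding is_Dsub_def by simp
qed

lemma W_bd:
  assumes D: "is_Dsub n phis N"
  shows "\<forall>w\<in>{w. cst w \<in> N}. \<forall>k\<ge>length phis. w k = 0"
proof (intro ballI allI impI)
  fix w k assume w: "w \<in> {w. cst w \<in> N}" and k: "length phis \<le> k"
  then have "cst w k = (\<lambda>_. 0)" using in_carrier[OF D] unfolding lin_carrier_def by auto
  then have "cst w k (\<lambda>_. 0) = 0" by simp
  then show "w k = 0" unfolding cst_def by simp
qed

lemma W_span:
  assumes D: "is_Dsub n phis N"
  shows "{w. cst w \<in> N} \<subseteq> V.span ({w. cst w \<in> N} \<inter> pure n phis)"
proof
  fix w assume w: "w \<in> {w. cst w \<in> N}"
  have wN: "cst w \<in> N" using w by simp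
  have bd: "\<forall>k\<ge>length phis. w k = 0" using W_bd[OF D] w by blast
  have Rin: "R n phis \<psi> w \<in> {w. cst w \<in> N} \<inter> pure n phis" if "\<psi> \<in> Reps n phis" for \<psi>
  proof
    have mx: "\<forall>k b. cst w k b \<noteq> 0 \<longrightarrow> deg n b \<le> deg n (\<lambda>_. 0)"
      unfolding cst_def by (auto simp: deg_def)
    have "cst (R n phis \<psi> (coef (cst w) (\<lambda>_. 0))) \<in> N"
      by (rule core[OF D wN mx _ that]) simp
    then show "R n phis \<psi> w \<in> {w. cst w \<in> N}" by (simp add: coef_cst)
    show "R n phis \<psi> w \<in> pure n phis"
      unfolding pure_def R_def
    proof (intro CollectI allI impI)
      fix k k' i
      assume "(if k < length phis \<and> trunc n (phis ! k) = \<psi> then w k else 0) \<noteq> 0"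
        "(if k' < length phis \<and> trunc n (phis ! k') = \<psi> then w k' else 0) \<noteq> 0" "i < n"
      then have "trunc n (phis ! k) i = trunc n (phis ! k') i" "i < n" by (auto split: if_splits)
      then show "(phis ! k) i = (phis ! k') i" unfolding trunc_def by simp
    qed
  qed
  have "w = (\<Sum>\<psi>\<in>Reps n phis. R n phis \<psi> w)" using decomp bd by metis
  also have "\<dots> \<in> V.span ({w. cst w \<in> N} \<inter> pure n phis)"
    by (intro V.span_sum V.span_base Rin)
  finally show "w \<in> V.span ({w. cst w \<in> N} \<inter> pure n phis)" .
qed

theorem mainTheorem3:
  fixes n :: nat and phis :: "(nat \<Rightarrow> complex) list" and N1 N2 :: "lelem set"
  assumes "is_Dsub n phis N1" and "is_Dsub n phis N2" and "N2 \<subseteq> N1"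
  shows "\<exists>psis :: (nat \<Rightarrow> complex) list. \<exists>f :: lelem \<Rightarrow> lelem.
           f ` N1 = lin_carrier n psis \<and>
           (\<forall>v\<in>N1. \<forall>w\<in>N1. f (lin_add v w) = lin_add (f v) (f w)) \<and>
           (\<forall>c. \<forall>v\<in>N1. f (lin_scale c v) = lin_scale c (f v)) \<and>
           (\<forall>i<n. \<forall>v\<in>N1. f (lin_X i v) = lin_X i (f v) \<and>
                           f (lin_D phis i v) = lin_D psis i (f v)) \<and>
           (\<forall>v\<in>N1. f v = lin_zero \<longleftrightarrow> v \<in> N2)"
proof -
  note D1 = assms(1) and D2 = assms(2) and sub = assms(3)
  define W1 where "W1 = {w. cst w \<in> N1}"
  define W2 where "W2 = {w. cst w \<in> N2}"
  have W21: "W2 \<subseteq> W1" unfolding W1_def W2_def using sub by auto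
  obtain psis L where lin: "Vector_Spaces.linear sc sc L"
    and Lbd: "\<forall>w\<in>W1. \<forall>j\<ge>length psis. L w j = 0"
    and Lsurj: "\<forall>y. (\<forall>j\<ge>length psis. y j = 0) \<longrightarrow> (\<exists>w\<in>W1. L w = y)"
    and Lker: "\<forall>w\<in>W1. L w = 0 \<longleftrightarrow> w \<in> W2"
    and Leq: "\<forall>i<n. \<forall>w\<in>W1. L (Lam phis i w) = Lam psis i (L w)"
    using linalg[OF W_subspace[OF D1] W_subspace[OF D2] W21[unfolded W1_def W2_def]
        W_bd[OF D1] W_span[OF D1] W_span[OF D2]] unfolding W1_def W2_def by blast
  interpret Ll: Vector_Spaces.linear sc sc L by (rule lin)
  define d where "d = length psis"
  define f where "f v = (\<lambda>j b. L (coef v b) j)" for v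
  have cW1: "coef v b \<in> W1" if "v \<in> N1" for v b
    unfolding W1_def using coefs_in[OF D1 that] by simp
  have fz: "f v j = (\<lambda>_. 0)" if "v \<in> N1" "d \<le> j" for v j
    unfolding f_def using Lbd cW1[OF that(1)] that(2) unfolding d_def by auto
  have img1: "f v \<in> lin_carrier n psis" if v: "v \<in> N1" for v
  proof -
    have vc: "v \<in> lin_carrier n phis" using in_carrier[OF D1 v] .
    have "f v j \<in> polys n" for j
    proof -
      have sub1: "{b. f v j b \<noteq> 0} \<subseteq> supp v"
      proof
        fix b assume "b \<in> {b. f v j b \<noteq> 0}"
        then have "coef v b \<noteq> 0" unfolding f_def by auto
        then show "b \<in> supp v" unfolding supp_def coef_def by (auto simp: fun_eq_iff)
      qed
      then have "finite {b. f v j b \<noteq> 0}" using supp_finite[OF vc] finite_subset by blast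
      moreover have "\<forall>b. f v j b \<noteq> 0 \<longrightarrow> (\<forall>i\<ge>n. b i = 0)" using sub1 supp_az[OF vc] by blast
      ultimately show ?thesis unfolding polys_def by blast
    qed
    then show ?thesis unfolding lin_carrier_def using fz[OF v] d_def by auto
  qed
  define pre where "pre y = (if y = 0 then 0 else (SOME w. w \<in> W1 \<and> L w = y))" for y
  have pre: "pre y \<in> W1 \<and> L (pre y) = y" if "\<forall>j\<ge>d. y j = 0" for y
  proof (cases "y = 0")
    case True
    then show ?thesis unfolding pre_def using W_subspace[OF D1] unfolding W1_def V.subspace_def by simp
  next
    case False
    have "\<exists>w. w \<in> W1 \<and> L w = y" using Lsurj that unfolding d_def by blast
    then have "(SOME w. w \<in> W1 \<and> L w = y) \<in> W1 \<and> L (SOME w. w \<in> W1 \<and> L w = y) = y"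
      by (rule someI_ex)
    moreover have "pre y = (SOME w. w \<in> W1 \<and> L w = y)" using False unfolding pre_def by simp
    ultimately show ?thesis by simp
  qed
  have img2: "u \<in> f ` N1" if u: "u \<in> lin_carrier n psis" for u
  proof -
    define v where "v = (\<lambda>k b. pre (coef u b) k)"
    have cu: "\<forall>j\<ge>d. coef u b j = 0" for b using u unfolding lin_carrier_def coef_def d_def by auto
    have cv: "coef v b = pre (coef u b)" for b unfolding v_def coef_def by simp
    have supv: "v k b \<noteq> 0 \<Longrightarrow> b \<in> supp u" for k b
    proof -
      assume "v k b \<noteq> 0"
      then have "coef u b \<noteq> 0" unfolding v_def pre_def by auto
      then show "b \<in> supp u" unfolding supp_def coef_def by (auto simp: fun_eq_iff)
    qed
    have vc: "v \<in> lin_carrier n phis"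
      unfolding lin_carrier_def
    proof (intro CollectI conjI allI impI)
      fix k assume "k < length phis"
      have "{b. v k b \<noteq> 0} \<subseteq> supp u" using supv by blast
      then have "finite {b. v k b \<noteq> 0}" using supp_finite[OF u] finite_subset by blast
      moreover have "\<forall>b. v k b \<noteq> 0 \<longrightarrow> (\<forall>i\<ge>n. b i = 0)" using supv supp_az[OF u] by blast
      ultimately show "v k \<in> polys n" unfolding polys_def by blast
    next
      fix k assume k: "length phis \<le> k"
      show "v k = (\<lambda>_. 0)"
      proof
        fix b
        have "pre (coef u b) \<in> W1" using pre cu by blast
        then show "v k b = 0" unfolding v_def using W_bd[OF D1] k unfolding W1_def by blast
      qed
    qed
    have vN: "v \<in> N1"
    proof (rule coefs_out[OF D1 vc], rule allI)
      fix b show "cst (coef v b) \<in> N1" using pre[OF cu] cv unfolding W1_def by simp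
    qed
    have "f v = u"
    proof (intro ext)
      fix j b
      have "f v j b = L (pre (coef u b)) j" unfolding f_def cv by simp
      also have "\<dots> = coef u b j" using pre[OF cu] by simp
      finally show "f v j b = u j b" unfolding coef_def by simp
    qed
    then show ?thesis using vN by blast
  qed
  have P1: "f ` N1 = lin_carrier n psis" using img1 img2 by blast
  have P2: "\<forall>v\<in>N1. \<forall>w\<in>N1. f (lin_add v w) = lin_add (f v) (f w)"
    unfolding f_def coef_add by (simp add: Ll.add lin_add_def)
  have P3: "\<forall>c. \<forall>v\<in>N1. f (lin_scale c v) = lin_scale c (f v)"
    unfolding f_def coef_scale Ll.scale by (simp add: lin_scale_def sc_def)
  have P4: "\<forall>i<n. \<forall>v\<in>N1. f (lin_X i v) = lin_X i (f v) \<and> f (lin_D phis i v) = lin_D psis i (f v)"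
  proof (intro allI impI ballI conjI)
    fix i v assume i: "i < n" and v: "v \<in> N1"
    show "f (lin_X i v) = lin_X i (f v)"
    proof (intro ext)
      fix j b
      show "f (lin_X i v) j b = lin_X i (f v) j b"
        unfolding f_def coef_X unfolding lin_X_def mulX_def by simp
    qed
    have vc: "v \<in> lin_carrier n phis" using in_carrier[OF D1 v] .
    show "f (lin_D phis i v) = lin_D psis i (f v)"
    proof (intro ext)
      fix j and b :: "nat \<Rightarrow> nat"
      define b' where "b' = b(i := b i + 1)"
      have "f (lin_D phis i v) j b = L (sc (of_nat (b i + 1)) (coef v b') + Lam phis i (coef v b)) j"
        unfolding f_def coef_D[OF vc] b'_def by simp
      also have "\<dots> = of_nat (b i + 1) * L (coef v b') j + Lam psis i (L (coef v b)) j"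
        using Leq i cW1[OF v] unfolding Ll.add Ll.scale by (simp add: sc_def)
      also have "\<dots> = lin_D psis i (f v) j b"
      proof (cases "j < d")
        case True then show ?thesis
          unfolding lin_D_def twD_def pderivX_def Lam_def f_def b'_def d_def by simp
      next
        case False
        then have "L (coef v b') j = 0" using Lbd cW1[OF v] unfolding d_def by simp
        then show ?thesis using False
          unfolding lin_D_def twD_def pderivX_def Lam_def f_def b'_def d_def by simp
      qed
      finally show "f (lin_D phis i v) j b = lin_D psis i (f v) j b" .
    qed
  qed
  have P5: "\<forall>v\<in>N1. f v = lin_zero \<longleftrightarrow> v \<in> N2"
  proof (intro ballI iffI)
    fix v assume v: "v \<in> N1" and fz0: "f v = lin_zero"
    have "coef v b \<in> W2" for b
    proof -
      have "L (coef v b) = 0"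
      proof
        fix j show "L (coef v b) j = 0 j" using fz0 unfolding f_def lin_zero_def by (simp add: fun_eq_iff)
      qed
      then show ?thesis using Lker cW1[OF v] by blast
    qed
    then show "v \<in> N2" using coefs_out[OF D2 in_carrier[OF D1 v]] unfolding W2_def by simp
  next
    fix v assume v: "v \<in> N1" and v2: "v \<in> N2"
    have "L (coef v b) = 0" for b
      using Lker cW1[OF v] coefs_in[OF D2 v2] unfolding W2_def by blast
    then show "f v = lin_zero" unfolding f_def lin_zero_def by (simp add: fun_eq_iff)
  qed
  show ?thesis using P1 P2 P3 P4 P5 by blast
qed

end
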